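(* Let $E$ be a countable directed graph, $x=x_0x_1\cdots\in E^\infty$, and $\beta\in(-\infty,0)$. If the orbit $[x]$ is $\beta$-summable, then $E^*s(x_i)$ is finite for every $i\ge0$, $s(x_i)\neq s(x_j)$ whenever $i\neq j$, and there exists $\mu\in E^*$ such that $s(\mu)$ is a source and $r(\mu)=s(x)$.
   Context: Directed graph conventions: paths $\mu=\mu_0\cdots\mu_{n-1}$ with $r(\mu_i)=s(\mu_{i+1})$, vertices as paths of length $0$, $E^*$ the finite paths, $E^*v=\{\mu\in E^*:r(\mu)=v\}$; $E^\infty$ the infinite paths $x=x_0x_1\cdots$ with $r(x_i)=s(x_{i+1})$, $s(x)=s(x_0)$. A vertex is a source if it receives no edges. The orbit (tail equivalence class) of $x\in E^\infty$ is $[x]=\{y\in E^\infty:\exists n,m\ge0,\ y_{i+m}=x_{i+n}\ \forall i\ge0\}$. $[x]$ is consistent if $x$ is not eventually periodic; then for $y\in[x]$ written $y=\mu z$, $x=\nu z$ with $\mu,\nu$ finite paths and $z\in E^\infty$, $l_x(y):=e^{-(|\mu|-|\nu|)}$ is well defined. $[x]$ is $\beta$-summable if it is consistent and $\sum_{y\in[x]}l_x(y)^\beta<\infty$. *)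

theory Defs
  imports "HOL-Analysis.Analysis"
begin

text \<open>A directed graph is given by a vertex type 'v, an edge type 'e and
  source/range maps s r :: 'e => 'v (E^0 = UNIV, E^1 = UNIV).
  A finite path is a pair (v, es): es = [] gives the vertex v (path of length 0);
  otherwise es is a list of edges with r(es!i) = s(es!(i+1)) and v = s(hd es).\<close>

definition fpath :: "('e \<Rightarrow> 'v) \<Rightarrow> ('e \<Rightarrow> 'v) \<Rightarrow> 'v \<times> 'e list \<Rightarrow> bool" where
  "fpath s r p \<longleftrightarrow> (snd p = [] \<or> s (hd (snd p)) = fst p) \<and>
     (\<forall>i. Suc i < length (snd p) \<longrightarrow> r (snd p ! i) = s (snd p ! Suc i))"

definition fsrc :: "'v \<times> 'e list \<Rightarrow> 'v" where
  "fsrc p = fst p"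

definition frng :: "('e \<Rightarrow> 'v) \<Rightarrow> 'v \<times> 'e list \<Rightarrow> 'v" where
  "frng r p = (if snd p = [] then fst p else r (last (snd p)))"

definition paths_to :: "('e \<Rightarrow> 'v) \<Rightarrow> ('e \<Rightarrow> 'v) \<Rightarrow> 'v \<Rightarrow> ('v \<times> 'e list) set" where
  "paths_to s r v = {p. fpath s r p \<and> frng r p = v}"

definition is_source :: "('e \<Rightarrow> 'v) \<Rightarrow> 'v \<Rightarrow> bool" where
  "is_source r v \<longleftrightarrow> (\<nexists>e. r e = v)"

definition ipath :: "('e \<Rightarrow> 'v) \<Rightarrow> ('e \<Rightarrow> 'v) \<Rightarrow> (nat \<Rightarrow> 'e) \<Rightarrow> bool" where
  "ipath s r x \<longleftrightarrow> (\<forall>i. r (x i) = s (x (Suc i)))"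

definition orbit :: "('e \<Rightarrow> 'v) \<Rightarrow> ('e \<Rightarrow> 'v) \<Rightarrow> (nat \<Rightarrow> 'e) \<Rightarrow> (nat \<Rightarrow> 'e) set" where
  "orbit s r x = {y. ipath s r y \<and> (\<exists>n m. \<forall>i. y (i + m) = x (i + n))}"

definition eventually_periodic :: "(nat \<Rightarrow> 'e) \<Rightarrow> bool" where
  "eventually_periodic x \<longleftrightarrow> (\<exists>n p. p > 0 \<and> (\<forall>i\<ge>n. x (i + p) = x i))"

definition consistent :: "(nat \<Rightarrow> 'e) \<Rightarrow> bool" where
  "consistent x \<longleftrightarrow> \<not> eventually_periodic x"

text \<open>l_x(y) = exp(-(|\<mu>| - |\<nu>|)) where y = \<mu> z, x = \<nu> z, i.e.
  y(i + |\<mu>|) = x(i + |\<nu>|) for all i.\<close>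
definition lx :: "(nat \<Rightarrow> 'e) \<Rightarrow> (nat \<Rightarrow> 'e) \<Rightarrow> real" where
  "lx x y = (let (m, n) = (SOME (m, n). \<forall>i. y (i + m) = x (i + n))
             in exp (- (real m - real n)))"

definition beta_summable :: "('e \<Rightarrow> 'v) \<Rightarrow> ('e \<Rightarrow> 'v) \<Rightarrow> real \<Rightarrow> (nat \<Rightarrow> 'e) \<Rightarrow> bool" where
  "beta_summable s r \<beta> x \<longleftrightarrow> consistent x \<and>
     (\<lambda>y. lx x y powr \<beta>) summable_on orbit s r x"

end

theory Submission
  imports Defs
begin

lemma shift_periodic:
  assumes "a \<noteq> b" "\<forall>j. (x::nat \<Rightarrow> 'e) (j + a) = x (j + b)"
  shows "eventually_periodic x"
proof -
  { fix a b :: nat and x :: "nat \<Rightarrow> 'e" assume ab: "a < b" "\<forall>j. x (j + a) = x (j + b)"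
    have "\<forall>i\<ge>a. x (i + (b - a)) = x i"
    proof (intro allI impI)
      fix i assume "a \<le> i"
      then show "x (i + (b - a)) = x i" using ab spec[OF ab(2), of "i - a"] by simp
    qed
    then have "eventually_periodic x" unfolding eventually_periodic_def using ab by (intro exI[of _ a] exI[of _ "b-a"]) auto }
  note * = this
  show ?thesis
  proof (cases "a < b")
    case True then show ?thesis using * assms by blast
  next
    case False then have "b < a" using assms by auto
    then show ?thesis using *[of b a x] assms by auto
  qed
qed

lemma tail_unique:
  assumes "consistent x" "\<forall>j. y (j + m) = x (j + n)" "\<forall>j. y (j + m') = x (j + n')"
  shows "real m - real n = real m' - real n'"
proof (rule ccontr)
  assume ne: "real m - real n \<noteq> real m' - real n'"
  have "\<forall>j. x (j + (n + m')) = x (j + (n' + m))"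
  proof
    fix j
    have "y ((j + m') + m) = x ((j+m') + n)" using assms(2) by blast
    moreover have "y ((j + m) + m') = x ((j+m) + n')" using assms(3) by blast
    ultimately show "x (j + (n + m')) = x (j + (n' + m))" by (simp add: ac_simps)
  qed
  moreover have "n + m' \<noteq> n' + m" using ne by linarith
  ultimately have "eventually_periodic x" using shift_periodic by blast
  then show False using assms(1) unfolding consistent_def by blast
qed

lemma lx_eq:
  assumes "consistent x" "\<forall>j. y (j + m) = x (j + n)"
  shows "lx x y = exp (- (real m - real n))"
proof -
  let ?P = "\<lambda>(m, n). \<forall>i. y (i + m) = x (i + n)"
  have "?P (m, n)" using assms by simp
  then have "?P (SOME p. ?P p)" by (rule someI)
  moreover obtain m' n' where mn: "(SOME p. ?P p) = (m', n')" by fastforce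
  ultimately have "\<forall>i. y (i + m') = x (i + n')" by simp
  then have "real m' - real n' = real m - real n" using tail_unique assms by metis
  then show ?thesis unfolding lx_def using mn by simp
qed

lemma finite_of_summable_lb:
  fixes f :: "'a \<Rightarrow> real"
  assumes "f summable_on A" "c > 0" "\<And>a. a \<in> A \<Longrightarrow> f a \<ge> c"
  shows "finite A"
proof (rule ccontr)
  assume inf: "infinite A"
  obtain N :: nat where N: "real N > infsum f A / c" using reals_Archimedean2 by blast
  obtain F where F: "F \<subseteq> A" "finite F" "card F = N" using infinite_arbitrarily_large[OF inf] by blast
  have "real N * c = (\<Sum>a\<in>F. c)" using F by simp
  also have "\<dots> \<le> sum f F" using F assms(3) by (intro sum_mono) auto
  also have "\<dots> = infsum f F" using F by simp
  also have "\<dots> \<le> infsum f A"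
    using F assms by (intro infsum_mono2) (auto intro: summable_on_subset_banach order.trans[OF less_imp_le])
  finally have "real N * c \<le> infsum f A" .
  then show False using N assms(2) by (simp add: field_simps)
qed

theorem lemma7p2:
  fixes s r :: "'e \<Rightarrow> 'v" and x :: "nat \<Rightarrow> 'e" and \<beta> :: real
  assumes "countable (UNIV :: 'v set)" and "countable (UNIV :: 'e set)"
    and "ipath s r x" and "\<beta> < 0"
    and "beta_summable s r \<beta> x"
  shows "(\<forall>i. finite (paths_to s r (s (x i))))
    \<and> (\<forall>i j. i \<noteq> j \<longrightarrow> s (x i) \<noteq> s (x j))
    \<and> (\<exists>\<mu>. fpath s r \<mu> \<and> is_source r (fsrc \<mu>) \<and> frng r \<mu> = s (x 0))"
proof -
  have cons: "consistent x" and summ: "(\<lambda>y. lx x y powr \<beta>) summable_on orbit s r x"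
    using assms(5) unfolding beta_summable_def by auto
  have fin: "finite (paths_to s r (s (x i)))" for i
  proof -
    define g where "g = (\<lambda>p::'v \<times> 'e list. \<lambda>j. if j < length (snd p) then snd p ! j else x (j - length (snd p) + i))"
    have tail: "g p (j + length (snd p)) = x (j + i)" for p j unfolding g_def by simp
    have orb: "g p \<in> orbit s r x" if p: "p \<in> paths_to s r (s (x i))" for p
    proof -
      obtain v es where pe: "p = (v, es)" by fastforce
      have fp: "fpath s r (v, es)" and rg: "frng r (v, es) = s (x i)" using p pe unfolding paths_to_def by auto
      have "ipath s r (g p)" unfolding ipath_def
      proof
        fix j
        show "r (g p j) = s (g p (Suc j))"
        proof (cases "Suc j < length es")
          case True then show ?thesis using fp pe unfolding g_def fpath_def by auto
        next
          case False
          show ?thesis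
          proof (cases "Suc j = length es")
            case True
            then have "es \<noteq> []" "last es = es ! j" by (auto simp: last_conv_nth, metis diff_Suc_1 last_conv_nth length_greater_0_conv zero_less_Suc)
            then show ?thesis using True rg pe unfolding g_def frng_def by auto
          next
            case False
            then have e1: "Suc j - length es + i = Suc (j - length es + i)" "\<not> j < length es" using \<open>\<not> Suc j < length es\<close> by auto
            have "r (x (j - length es + i)) = s (x (Suc (j - length es + i)))" using assms(3) unfolding ipath_def by blast
            then show ?thesis using e1 \<open>\<not> Suc j < length es\<close> pe unfolding g_def by simp
          qed
        qed
      qed
      moreover have "\<forall>j. g p (j + length (snd p)) = x (j + i)" using tail by blast
      ultimately show ?thesis unfolding orbit_def by blast
    qed
    have inj: "inj_on g (paths_to s r (s (x i)))"
    proof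
      fix p q assume p: "p \<in> paths_to s r (s (x i))" and q: "q \<in> paths_to s r (s (x i))" and e: "g p = g q"
      have "real (length (snd p)) - real i = real (length (snd q)) - real i"
        using tail_unique[OF cons, of "g p" "length (snd p)" i "length (snd q)" i] tail e by metis
      then have len: "length (snd p) = length (snd q)" by simp
      have es: "snd p = snd q"
      proof (rule nth_equalityI)
        show "length (snd p) = length (snd q)" by (rule len)
        fix j assume "j < length (snd p)"
        then show "snd p ! j = snd q ! j" using fun_cong[OF e, of j] len unfolding g_def by simp
      qed
      have "fst p = fst q"
      proof (cases "snd p = []")
        case True then show ?thesis using p q es unfolding paths_to_def frng_def by auto
      next
        case False then show ?thesis using p q es unfolding paths_to_def fpath_def by auto
      qed
      then show "p = q" using es by (simp add: prod_eq_iff)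
    qed
    have "finite (g ` paths_to s r (s (x i)))"
    proof (rule finite_of_summable_lb)
      show "(\<lambda>y. lx x y powr \<beta>) summable_on g ` paths_to s r (s (x i))"
        using summ orb by (intro summable_on_subset_banach[OF summ]) auto
      show "exp (\<beta> * real i) > 0" by simp
      fix y assume "y \<in> g ` paths_to s r (s (x i))"
      then obtain p where y: "y = g p" by blast
      have "lx x y = exp (- (real (length (snd p)) - real i))"
        using lx_eq[OF cons] tail y by blast
      then have "lx x y powr \<beta> = exp (\<beta> * real i - \<beta> * real (length (snd p)))"
        by (simp add: powr_def algebra_simps)
      moreover have "\<beta> * real (length (snd p)) \<le> 0" using assms(4) by (simp add: mult_nonpos_nonneg)
      ultimately show "lx x y powr \<beta> \<ge> exp (\<beta> * real i)" by simp
    qed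
    then show ?thesis using finite_imageD inj by blast
  qed
  have dist: "s (x i) \<noteq> s (x j)" if ij: "i < j" for i j
  proof
    assume eq: "s (x i) = s (x j)"
    define d where "d = j - i"
    have d: "d > 0" "i + d = j" using ij unfolding d_def by auto
    define P where "P = (\<lambda>k::nat. (s (x i), map (\<lambda>t. x (i + t mod d)) [0..<Suc k * d]))"
    have "P k \<in> paths_to s r (s (x i))" for k
    proof -
      have hd: "s (hd (snd (P k))) = s (x i)" using d unfolding P_def by (simp add: hd_map upt_conv_Cons)
      have step: "r (x (i + t mod d)) = s (x (i + Suc t mod d))" for t
      proof (cases "Suc t mod d = 0")
        case True
        then have "t mod d = d - 1" using d by (simp add: mod_Suc split: if_splits)
        moreover have "Suc (i + (d - 1)) = j" using d by simp
        ultimately have "r (x (i + t mod d)) = s (x j)" using assms(3) unfolding ipath_def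
          by metis
        then show ?thesis using True eq by simp
      next
        case False
        then have "Suc t mod d = Suc (t mod d)" by (metis mod_Suc)
        then show ?thesis using assms(3) unfolding ipath_def by simp
      qed
      have fp: "fpath s r (P k)" unfolding fpath_def
      proof (intro conjI allI impI)
        show "snd (P k) = [] \<or> s (hd (snd (P k))) = fst (P k)" using hd unfolding P_def by simp
        fix t assume "Suc t < length (snd (P k))"
        then have "Suc t < Suc k * d" unfolding P_def by simp
        then show "r (snd (P k) ! t) = s (snd (P k) ! Suc t)"
          unfolding P_def using step[of t] by (simp del: upt_Suc)
      qed
      have "snd (P k) \<noteq> []" using d unfolding P_def by simp
      moreover have "last (snd (P k)) = x (i + (Suc k * d - 1) mod d)" using d unfolding P_def
        by (simp add: last_map)
      moreover have "(Suc k * d - 1) mod d = d - 1"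
      proof -
        have "Suc k * d - 1 = (d - 1) + k * d" using d by (simp add: algebra_simps)
        moreover have "((d - 1) + k * d) mod d = d - 1" using d by (simp only: mod_mult_self1) simp
        ultimately show ?thesis by metis
      qed
      moreover have "r (x (i + (d - 1))) = s (x j)"
      proof -
        have "Suc (i + (d - 1)) = j" using d by simp
        then show ?thesis using assms(3) unfolding ipath_def by metis
      qed
      ultimately have "frng r (P k) = s (x i)" unfolding frng_def using eq by simp
      then show ?thesis using fp unfolding paths_to_def by simp
    qed
    then have "range P \<subseteq> paths_to s r (s (x i))" by blast
    moreover have "inj P"
    proof
      fix a b assume "P a = P b"
      then have "length (snd (P a)) = length (snd (P b))" by simp
      then have "Suc a * d = Suc b * d" unfolding P_def by (simp del: upt_Suc mult_Suc)
      then show "a = b" using d by simp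
    qed
    ultimately have "infinite (paths_to s r (s (x i)))" using finite_subset range_inj_infinite by blast
    then show False using fin by blast
  qed
  have src: "\<exists>\<mu>. fpath s r \<mu> \<and> is_source r (fsrc \<mu>) \<and> frng r \<mu> = s (x 0)"
  proof (rule ccontr)
    assume no: "\<not> ?thesis"
    have "\<exists>p \<in> paths_to s r (s (x 0)). length (snd p) = n" for n
    proof (induction n)
      case 0
      show ?case by (rule bexI[of _ "(s (x 0), [])"]) (auto simp: paths_to_def fpath_def frng_def)
    next
      case (Suc n)
      then obtain v es where p: "(v, es) \<in> paths_to s r (s (x 0))" "length es = n" by auto
      then have "\<not> is_source r v" using no unfolding paths_to_def fsrc_def by auto
      then obtain e where e: "r e = v" unfolding is_source_def by blast
      have fp: "fpath s r (v, es)" and rg: "frng r (v, es) = s (x 0)" using p unfolding paths_to_def by auto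
      have "fpath s r (s e, e # es)" unfolding fpath_def
      proof (intro conjI allI impI)
        fix k assume k: "Suc k < length (snd (s e, e # es))"
        show "r (snd (s e, e # es) ! k) = s (snd (s e, e # es) ! Suc k)"
        proof (cases k)
          case 0 then show ?thesis using fp e k unfolding fpath_def by (cases es) auto
        next
          case (Suc k') then show ?thesis using fp k unfolding fpath_def by auto
        qed
      qed simp
      moreover have "frng r (s e, e # es) = s (x 0)" using rg e unfolding frng_def by auto
      ultimately show ?case using p by (intro bexI[of _ "(s e, e # es)"]) (auto simp: paths_to_def)
    qed
    then have "UNIV \<subseteq> (\<lambda>p. length (snd p)) ` paths_to s r (s (x 0))" by (metis image_eqI subsetI)
    then have "finite (UNIV :: nat set)" using fin[of 0] finite_surj by blast
    then show False by simp
  qed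
  have "\<forall>i j. i \<noteq> j \<longrightarrow> s (x i) \<noteq> s (x j)"
    using dist by (metis linorder_neqE_nat)
  then show ?thesis using fin src by blast
qed

end
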